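(* For the public-key scheme $\mathsf{Ring\text{-}LWE\text{-}PKE}$ with secret key $s$, there is a quantum algorithm that makes one quantum query to the decryption function $\mathsf{Dec}_s$ and recovers the entire key $s$ with probability at least $4/\pi^2-o(1)$.
   Context: Let $n$ be a power of two, $q$ a polynomially bounded prime modulus, $\mathcal R=\mathbb Z[x]/\langle x^n+1\rangle$, $\mathcal R_q=\mathbb Z_q[x]/\langle x^n+1\rangle$, and $\chi$ an error distribution over $\mathcal R$. $\mathsf{Ring\text{-}LWE\text{-}PKE}$: $\mathsf{KeyGen}$ samples uniform $a\in\mathcal R_q$ and $e,s\leftarrow\chi$, outputs secret key $s$ and public key $(a,c=a\cdot s+e\bmod q)$. To encrypt $b\in\{0,1\}$, sample $r,e_1,e_2\leftarrow\chi$ and output $(u,v)=(a r+e_1,\,c r+e_2+b\lfloor q/2\rfloor)\in\mathcal R_q^2$. $\mathsf{Dec}_s(u,v)$ computes $v-u\cdot s\in\mathcal R_q$ and outputs $0$ if its constant coefficient is closer to $0$ than to $\lfloor q/2\rfloor$ (modulo $q$), and $1$ otherwise. A quantum query to $\mathsf{Dec}_s$ means one application of $|u,v\rangle|y\rangle\mapsto|u,v\rangle|y\oplus\mathsf{Dec}_s(u,v)\rangle$ on arbitrary superpositions of $(u,v)\in\mathcal R_q^2$. *)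

theory Defs
  imports Complex_Main "HOL-Computational_Algebra.Primes"
begin

text \<open>Elements of R_q are represented by their coefficient vectors:
  functions nat => int, with coefficients in {0..<q} at positions i < n and 0 elsewhere.\<close>

definition Rq :: "nat \<Rightarrow> int \<Rightarrow> (nat \<Rightarrow> int) set" where
  "Rq n q = {f. (\<forall>i<n. 0 \<le> f i \<and> f i < q) \<and> (\<forall>i\<ge>n. f i = 0)}"

definition rq_sub :: "nat \<Rightarrow> int \<Rightarrow> (nat \<Rightarrow> int) \<Rightarrow> (nat \<Rightarrow> int) \<Rightarrow> (nat \<Rightarrow> int)" where
  "rq_sub n q a b = (\<lambda>k. if k < n then (a k - b k) mod q else 0)"

text \<open>Negacyclic multiplication modulo x^n + 1 and q.\<close>
definition rq_mult :: "nat \<Rightarrow> int \<Rightarrow> (nat \<Rightarrow> int) \<Rightarrow> (nat \<Rightarrow> int) \<Rightarrow> (nat \<Rightarrow> int)" where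
  "rq_mult n q a b = (\<lambda>k. if k < n then
      (\<Sum>i<n. \<Sum>j<n. if i + j = k then a i * b j
                     else if i + j = k + n then - (a i * b j) else 0) mod q
    else 0)"

definition cdist :: "int \<Rightarrow> int \<Rightarrow> int \<Rightarrow> int" where
  "cdist q x y = min ((x - y) mod q) ((y - x) mod q)"

text \<open>Decryption Dec_s(u,v): bit False = 0, True = 1.  Output 0 iff the constant
  coefficient of v - u*s is (strictly) closer to 0 than to floor(q/2) modulo q.\<close>
definition rlwe_dec :: "nat \<Rightarrow> int \<Rightarrow> (nat \<Rightarrow> int) \<Rightarrow> (nat \<Rightarrow> int) \<times> (nat \<Rightarrow> int) \<Rightarrow> bool" where
  "rlwe_dec n q s uv =
     (let t = rq_sub n q (snd uv) (rq_mult n q (fst uv) s) 0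
      in \<not> (cdist q t 0 < cdist q t (q div 2)))"

text \<open>Computational basis states: query input (u,v), answer bit y, workspace index w.\<close>
type_synonym qbasis = "((nat \<Rightarrow> int) \<times> (nat \<Rightarrow> int)) \<times> bool \<times> nat"

definition qspace :: "nat \<Rightarrow> int \<Rightarrow> nat set \<Rightarrow> qbasis set" where
  "qspace n q W = (Rq n q \<times> Rq n q) \<times> (UNIV :: bool set) \<times> W"

definition unitary_on :: "'b set \<Rightarrow> ('b \<Rightarrow> 'b \<Rightarrow> complex) \<Rightarrow> bool" where
  "unitary_on S M \<longleftrightarrow>
     (\<forall>i\<in>S. \<forall>j\<in>S. (\<Sum>k\<in>S. cnj (M k i) * M k j) = (if i = j then 1 else 0))"

definition apply_mat :: "'b set \<Rightarrow> ('b \<Rightarrow> 'b \<Rightarrow> complex) \<Rightarrow> ('b \<Rightarrow> complex) \<Rightarrow> ('b \<Rightarrow> complex)" where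
  "apply_mat S M \<psi> = (\<lambda>i. \<Sum>j\<in>S. M i j * \<psi> j)"

definition query_oracle :: "((nat \<Rightarrow> int) \<times> (nat \<Rightarrow> int) \<Rightarrow> bool) \<Rightarrow> (qbasis \<Rightarrow> complex) \<Rightarrow> (qbasis \<Rightarrow> complex)" where
  "query_oracle f \<psi> = (\<lambda>(uv, y, w). \<psi> (uv, y \<noteq> f uv, w))"

text \<open>A one-query algorithm: prepare a normalized state psi0 (any state is reachable
  by a unitary from |0>), make one query, apply a unitary U, measure in the computational
  basis and output out(b).\<close>
definition one_query_success ::
  "nat \<Rightarrow> int \<Rightarrow> nat set \<Rightarrow> (qbasis \<Rightarrow> complex) \<Rightarrow> (qbasis \<Rightarrow> qbasis \<Rightarrow> complex)
   \<Rightarrow> (qbasis \<Rightarrow> (nat \<Rightarrow> int)) \<Rightarrow> ((nat \<Rightarrow> int) \<times> (nat \<Rightarrow> int) \<Rightarrow> bool) \<Rightarrow> (nat \<Rightarrow> int) \<Rightarrow> real" where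
  "one_query_success n q W \<psi>0 U out f s =
     (\<Sum>b\<in>{b \<in> qspace n q W. out b = s}.
        (cmod (apply_mat (qspace n q W) U (query_oracle f \<psi>0) b))^2)"

definition valid_one_query_alg ::
  "nat \<Rightarrow> int \<Rightarrow> nat set \<Rightarrow> (qbasis \<Rightarrow> complex) \<Rightarrow> (qbasis \<Rightarrow> qbasis \<Rightarrow> complex) \<Rightarrow> bool" where
  "valid_one_query_alg n q W \<psi>0 U \<longleftrightarrow>
     finite W \<and> (\<Sum>b\<in>qspace n q W. (cmod (\<psi>0 b))^2) = 1 \<and> unitary_on (qspace n q W) U"

end

theory Submission
  imports Defs
begin


definition ee :: "int \<Rightarrow> int \<Rightarrow> complex" where
  "ee q x = cis (2 * pi * of_int x / of_int q)"

lemma ee_add: "ee q (a + b) = ee q a * ee q b"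
  by (simp add: ee_def cis_mult add_divide_distrib distrib_left)

lemma ee_0[simp]: "ee q 0 = 1" by (simp add: ee_def)

lemma ee_cnj: "cnj (ee q a) = ee q (- a)"
  by (simp add: ee_def cis_cnj)

lemma ee_mult_q: "q > 0 \<Longrightarrow> ee q (q * k) = 1"
proof -
  assume "q > 0"
  then have "2 * pi * of_int (q * k) / of_int q = 2 * pi * of_int k" by simp
  then show ?thesis unfolding ee_def
    by (metis Ints_of_int cis_multiple_2pi)
qed

lemma ee_cong: "q > 0 \<Longrightarrow> q dvd (a - b) \<Longrightarrow> ee q a = ee q b"
proof -
  assume q: "q > 0" and d: "q dvd (a - b)"
  then obtain k where "a = b + q * k" by (metis add_diff_cancel_left' dvd_def diff_add_cancel add.commute)
  then show ?thesis using ee_mult_q[OF q] by (simp add: ee_add)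
qed

lemma ee_mod: "q > 0 \<Longrightarrow> ee q (a mod q) = ee q a"
  by (rule ee_cong) (auto simp: mod_eq_dvd_iff[symmetric] )

lemma ee_eq_1: "q > 0 \<Longrightarrow> ee q d = 1 \<longleftrightarrow> q dvd d"
proof
  assume q: "q > 0" and "ee q d = 1"
  then have "cos (2 * pi * of_int d / of_int q) = 1"
    unfolding ee_def by (metis cis.sel(1) one_complex.sel(1))
  then obtain m :: int where m: "2 * pi * of_int d / of_int q = of_int m * 2 * pi"
    using cos_one_2pi_int by blast
  then have "of_int d = (of_int m * of_int q :: real)" using q
    by (simp add: field_simps)
  then have "d = m * q" by (metis of_int_eq_iff of_int_mult)
  then show "q dvd d" by simp
next
  assume "q > 0" "q dvd d"
  then show "ee q d = 1" using ee_mult_q by (metis dvd_def)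
qed

lemma ee_pow: "ee q d ^ k = ee q (int k * d)"
  by (simp add: ee_def DeMoivre mult_ac)

lemma sum_int_range: "(\<Sum>x\<in>{0..<q}. f x) = (\<Sum>k<nat q. f (int k))"
proof -
  have "{0..<q} = int ` {..<nat q}"
    by (auto simp: image_iff intro!: bexI[of _ "nat _"])
  moreover have "inj_on int {..<nat q}" by simp
  ultimately show ?thesis by (simp add: sum.reindex)
qed

lemma char_sum: assumes q: "q > 0"
  shows "(\<Sum>x\<in>{0..<q}. ee q (x * d)) = (if q dvd d then of_int q else 0)"
proof -
  have "(\<Sum>x\<in>{0..<q}. ee q (x * d)) = (\<Sum>k<nat q. ee q d ^ k)"
    by (simp add: sum_int_range ee_pow)
  also have "\<dots> = (if q dvd d then of_int q else 0)"
  proof (cases "q dvd d")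
    case True
    then have "ee q d = 1" using ee_eq_1[OF q] by simp
    then show ?thesis using True q by simp
  next
    case False
    then have "ee q d \<noteq> 1" using ee_eq_1[OF q] by simp
    moreover have "ee q d ^ nat q = 1" using q ee_pow ee_mult_q
      by (metis int_nat_eq less_le mult.commute)
    ultimately show ?thesis using False by (simp add: geometric_sum)
  qed
  finally show ?thesis .
qed



lemma Rq_0: "Rq 0 q = {\<lambda>_. 0}"
  by (auto simp: Rq_def)

lemma Rq_Suc_bij: "bij_betw (\<lambda>(f,x). f(n:=x)) (Rq n q \<times> {0..<q}) (Rq (Suc n) q)"
by (rule bij_betw_byWitness[where f'="\<lambda>h. (h(n:=0), h n)"]) (auto simp: Rq_def)

lemma finite_Rq: "finite (Rq n q)"
proof (induction n)
  case 0 then show ?case by (simp add: Rq_0)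
next
  case (Suc n)
  then show ?case using bij_betw_finite[OF Rq_Suc_bij[of n q]] by simp
qed

lemma sum_prod_Rq:
  fixes g :: "nat \<Rightarrow> int \<Rightarrow> 'a::comm_semiring_1"
  shows "(\<Sum>f\<in>Rq n q. \<Prod>i<n. g i (f i)) = (\<Prod>i<n. \<Sum>x\<in>{0..<q}. g i x)"
proof (induction n)
  case 0 then show ?case by (simp add: Rq_0)
next
  case (Suc n)
  have "(\<Sum>f\<in>Rq (Suc n) q. \<Prod>i<Suc n. g i (f i))
      = (\<Sum>p\<in>Rq n q \<times> {0..<q}. \<Prod>i<Suc n. g i (((\<lambda>(f,x). f(n:=x)) p) i))"
    by (rule sum.reindex_bij_betw[OF Rq_Suc_bij, symmetric])
  also have "\<dots> = (\<Sum>p\<in>Rq n q \<times> {0..<q}. (\<Prod>i<n. g i (fst p i)) * g n (snd p))"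
    by (rule sum.cong) (auto intro!: prod.cong)
  also have "\<dots> = (\<Sum>f\<in>Rq n q. \<Sum>x\<in>{0..<q}. (\<Prod>i<n. g i (f i)) * g n x)"
    by (simp add: sum.cartesian_product case_prod_beta)
  also have "\<dots> = (\<Sum>f\<in>Rq n q. \<Prod>i<n. g i (f i)) * (\<Sum>x\<in>{0..<q}. g n x)"
    by (simp add: sum_product)
  finally show ?case using Suc by simp
qed

lemma ee_sum: "ee q (\<Sum>i\<in>A. a i) = (\<Prod>i\<in>A. ee q (a i))"
  by (induction A rule: infinite_finite_induct) (auto simp: ee_add)

lemma char_sum_Rq: assumes q: "q > 0"
  shows "(\<Sum>u\<in>Rq n q. ee q (\<Sum>i<n. u i * d i)) = (if \<forall>i<n. q dvd d i then of_int q ^ n else 0)"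
proof -
  have "(\<Sum>u\<in>Rq n q. ee q (\<Sum>i<n. u i * d i)) = (\<Sum>u\<in>Rq n q. \<Prod>i<n. ee q (u i * d i))"
    by (simp add: ee_sum)
  also have "\<dots> = (\<Prod>i<n. \<Sum>x\<in>{0..<q}. ee q (x * d i))"
    by (rule sum_prod_Rq)
  also have "\<dots> = (\<Prod>i<n. if q dvd d i then of_int q else 0)"
    by (simp add: char_sum[OF q])
  also have "\<dots> = (if \<forall>i<n. q dvd d i then of_int q ^ n else 0)"
    by (auto simp: prod_zero_iff)
  finally show ?thesis .
qed

lemma card_Rq: "q > 0 \<Longrightarrow> card (Rq n q) = nat q ^ n"
proof -
  assume q: "q > 0"
  have "(\<Sum>f\<in>Rq n q. \<Prod>i<n. (1::nat)) = (\<Prod>i<n. \<Sum>x\<in>{0..<q}. (1::nat))"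
    by (rule sum_prod_Rq)
  then show ?thesis by simp
qed



lemma unitary_norm:
  assumes fin: "finite S" and U: "unitary_on S M"
  shows "(\<Sum>i\<in>S. (cmod (apply_mat S M \<phi> i))^2) = (\<Sum>j\<in>S. (cmod (\<phi> j))^2)"
proof -
  have "complex_of_real (\<Sum>i\<in>S. (cmod (apply_mat S M \<phi> i))^2)
      = (\<Sum>i\<in>S. cnj (\<Sum>j\<in>S. M i j * \<phi> j) * (\<Sum>k\<in>S. M i k * \<phi> k))"
    by (simp only: of_real_sum complex_norm_square) (simp add: apply_mat_def mult.commute)
  also have "\<dots> = (\<Sum>i\<in>S. \<Sum>j\<in>S. \<Sum>k\<in>S. (cnj (\<phi> j) * \<phi> k) * (cnj (M i j) * M i k))"
    by (simp add: sum_product mult_ac, rule sum.cong[OF refl], rule sum.swap)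
  also have "\<dots> = (\<Sum>j\<in>S. \<Sum>i\<in>S. \<Sum>k\<in>S. (cnj (\<phi> j) * \<phi> k) * (cnj (M i j) * M i k))"
    by (rule sum.swap)
  also have "\<dots> = (\<Sum>j\<in>S. \<Sum>k\<in>S. \<Sum>i\<in>S. (cnj (\<phi> j) * \<phi> k) * (cnj (M i j) * M i k))"
    by (rule sum.cong[OF refl], rule sum.swap)
  also have "\<dots> = (\<Sum>j\<in>S. \<Sum>k\<in>S. (cnj (\<phi> j) * \<phi> k) * (\<Sum>i\<in>S. cnj (M i j) * M i k))"
    by (simp add: sum_distrib_left)
  also have "\<dots> = (\<Sum>j\<in>S. \<Sum>k\<in>S. (cnj (\<phi> j) * \<phi> k) * (if j = k then 1 else 0))"
    using U unfolding unitary_on_def by (intro sum.cong refl) simp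
  also have "\<dots> = (\<Sum>j\<in>S. cnj (\<phi> j) * \<phi> j)"
    using fin by (simp add: if_distrib cong: if_cong)
  also have "\<dots> = complex_of_real (\<Sum>j\<in>S. (cmod (\<phi> j))^2)"
    by (simp only: of_real_sum complex_norm_square) (simp add: mult.commute)
  finally show ?thesis using of_real_eq_iff by blast
qed

lemma sum_qspace: "sum F (qspace n q {0}) =
   (\<Sum>u\<in>Rq n q. \<Sum>v\<in>Rq n q. F ((u,v),False,0) + F ((u,v),True,0))"
proof -
  have "sum F (qspace n q {0}) = (\<Sum>uv\<in>Rq n q \<times> Rq n q. \<Sum>yw\<in>UNIV \<times> {0}. F (uv, yw))"
    unfolding qspace_def by (subst sum.cartesian_product) (simp add: finite_Rq)
  also have "\<dots> = (\<Sum>uv\<in>Rq n q \<times> Rq n q. F (uv,False,0) + F (uv,True,0))"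
  proof -
    have "(UNIV :: bool set) \<times> {0::nat} = {(False,0),(True,0)}" by (auto simp: UNIV_bool)
    then show ?thesis by simp
  qed
  also have "\<dots> = (\<Sum>u\<in>Rq n q. \<Sum>v\<in>Rq n q. F ((u,v),False,0) + F ((u,v),True,0))"
    by (simp add: sum.cartesian_product)
  finally show ?thesis .
qed



definition ip :: "nat \<Rightarrow> (nat \<Rightarrow> int) \<Rightarrow> (nat \<Rightarrow> int) \<Rightarrow> int" where
  "ip n a b = (\<Sum>i<n. a i * b i)"

definition Umat :: "nat \<Rightarrow> int \<Rightarrow> qbasis \<Rightarrow> qbasis \<Rightarrow> complex" where
  "Umat n q b' b = (case b' of ((u',v'),y',w') \<Rightarrow> case b of ((u,v),y,w) \<Rightarrow>
      if y' = y \<and> w' = w then ee q (ip n u' u + ip n v' v) / of_int q ^ n else 0)"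

lemma Rq_dvd_eq:
  assumes a: "a \<in> Rq n q" and b: "b \<in> Rq n q"
  shows "(\<forall>i<n. q dvd (b i - a i)) \<longleftrightarrow> a = b"
proof
  assume h: "\<forall>i<n. q dvd (b i - a i)"
  show "a = b"
  proof
    fix i
    show "a i = b i"
    proof (cases "i < n")
      case True
      with a b have r: "0 \<le> a i" "a i < q" "0 \<le> b i" "b i < q" by (auto simp: Rq_def)
      from h True have "q dvd (b i - a i)" by simp
      then obtain k where k: "b i - a i = q * k" by (auto simp: dvd_def)
      have "k = 0"
      proof (rule ccontr)
        assume "k \<noteq> 0"
        then have "\<bar>q * k\<bar> \<ge> q" using r by (auto simp: abs_mult)
        with k r show False by auto
      qed
      with k show ?thesis by simp
    next
      case False
      with a b show ?thesis by (auto simp: Rq_def)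
    qed
  qed
qed simp

lemma ip_diff: "ip n u b - ip n u a = ip n u (\<lambda>k. b k - a k)"
  by (simp add: ip_def sum_subtractf right_diff_distrib)

lemma qspace0_elem: "i \<in> qspace n q {0} \<Longrightarrow> \<exists>u v y. i = ((u,v),y,0) \<and> u \<in> Rq n q \<and> v \<in> Rq n q"
  by (auto simp: qspace_def)

lemma unitary_U: assumes q: "q > 0" shows "unitary_on (qspace n q {0}) (Umat n q)"
  unfolding unitary_on_def
proof (intro ballI)
  fix i j assume "i \<in> qspace n q {0}" "j \<in> qspace n q {0}"
  then obtain u1 v1 y1 u2 v2 y2 where i: "i = ((u1,v1),y1,0)" and j: "j = ((u2,v2),y2,0)"
    and R: "u1 \<in> Rq n q" "v1 \<in> Rq n q" "u2 \<in> Rq n q" "v2 \<in> Rq n q"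
    using qspace0_elem by metis
  define Q :: complex where "Q = of_int q ^ n"
  have Q0: "Q \<noteq> 0" using q by (simp add: Q_def)
  have cQ: "cnj Q = Q" by (simp add: Q_def)
  have cardQ: "of_nat (card (Rq n q)) = Q" using q by (simp add: Q_def card_Rq)
  define A where "A u = ee q (ip n u (\<lambda>k. u2 k - u1 k))" for u
  define B where "B v = ee q (ip n v (\<lambda>k. v2 k - v1 k))" for v
  have key: "cnj (Umat n q ((u,v),y,0) i) * Umat n q ((u,v),y,0) j =
     (if y = y1 \<and> y = y2 then A u * B v / Q^2 else 0)" for u v y
  proof -
    have "ee q (- (ip n u u1 + ip n v v1)) * ee q (ip n u u2 + ip n v v2) = A u * B v"
      unfolding A_def B_def ee_add[symmetric] using ip_diff[of n u u2 u1] ip_diff[of n v v2 v1]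
      by (simp add: algebra_simps)
    then show ?thesis unfolding i j Umat_def Q_def[symmetric]
      by (auto simp: ee_cnj cQ power2_eq_square)
  qed
  have "(\<Sum>k\<in>qspace n q {0}. cnj (Umat n q k i) * Umat n q k j)
     = (\<Sum>u\<in>Rq n q. \<Sum>v\<in>Rq n q. (if y1 = y2 then A u * B v / Q^2 else 0))"
    unfolding sum_qspace key by (intro sum.cong refl) auto
  also have "\<dots> = (if y1 = y2 then (\<Sum>u\<in>Rq n q. A u) * (\<Sum>v\<in>Rq n q. B v) / Q^2 else 0)"
    by (simp add: sum_product sum_divide_distrib)
  also have "\<dots> = (if y1 = y2 \<and> u1 = u2 \<and> v1 = v2 then 1 else 0)"
    unfolding A_def B_def ip_def using Rq_dvd_eq[OF R(1,3)] Rq_dvd_eq[OF R(2,4)] Q0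
    by (simp add: char_sum_Rq[OF q] Q_def[symmetric] power2_eq_square cardQ)
  also have "\<dots> = (if i = j then 1 else 0)" using i j by auto
  finally show "(\<Sum>k\<in>qspace n q {0}. cnj (Umat n q k i) * Umat n q k j) = (if i = j then 1 else 0)" .
qed



definition vemb :: "int \<Rightarrow> nat \<Rightarrow> int" where
  "vemb x = (\<lambda>i. if i = 0 then x else 0)"

definition cc :: "nat \<Rightarrow> int \<Rightarrow> complex" where
  "cc n q = complex_of_real (1 / sqrt (2 * real_of_int q ^ (n+1)))"

definition psi0 :: "nat \<Rightarrow> int \<Rightarrow> qbasis \<Rightarrow> complex" where
  "psi0 n q b = (case b of ((u,v),y,w) \<Rightarrow>
      if (\<forall>i>0. v i = 0) then (if y then - cc n q else cc n q) else 0)"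

definition sp :: "nat \<Rightarrow> (nat \<Rightarrow> int) \<Rightarrow> nat \<Rightarrow> int" where
  "sp n s i = (\<Sum>j<n. if i + j = 0 then s j else if i + j = n then - s j else 0)"

definition Lu :: "nat \<Rightarrow> (nat \<Rightarrow> int) \<Rightarrow> (nat \<Rightarrow> int) \<Rightarrow> int" where
  "Lu n s u = (\<Sum>i<n. u i * sp n s i)"

definition Dq :: "int \<Rightarrow> int \<Rightarrow> bool" where
  "Dq q t = (\<not> (cdist q t 0 < cdist q t (q div 2)))"

definition Gi :: "int \<Rightarrow> int \<Rightarrow> complex" where
  "Gi q t = (if Dq q t then -1 else 1)"

definition Ghat :: "int \<Rightarrow> int \<Rightarrow> complex" where
  "Ghat q b = (\<Sum>t\<in>{0..<q}. ee q (b * t) * Gi q t)"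

lemma sum_V0:
  assumes n: "n > 0"
  shows "(\<Sum>v\<in>Rq n q. if (\<forall>i>0. v i = 0) then F v else 0) = (\<Sum>x\<in>{0..<q}. F (vemb x))"
proof -
  have "(\<Sum>v\<in>Rq n q. if (\<forall>i>0. v i = 0) then F v else 0) = (\<Sum>v\<in>{v\<in>Rq n q. \<forall>i>0. v i = 0}. F v)"
    by (simp add: sum.inter_filter finite_Rq)
  also have "\<dots> = (\<Sum>x\<in>{0..<q}. F (vemb x))"
  proof (rule sum.reindex_bij_betw[symmetric])
    show "bij_betw vemb {0..<q} {v \<in> Rq n q. \<forall>i>0. v i = 0}"
      by (rule bij_betw_byWitness[where f'="\<lambda>v. v 0"])
         (use n in \<open>auto simp: vemb_def Rq_def fun_eq_iff\<close>)
  qed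
  finally show ?thesis .
qed

lemma mult0: "n > 0 \<Longrightarrow> rq_mult n q u s 0 = Lu n s u mod q"
  unfolding rq_mult_def Lu_def sp_def
proof -
  assume "n > 0"
  have "\<And>i j. u i * (if i + j = 0 then s j else if i + j = n then - s j else 0) =
        (if i + j = 0 then u i * s j else if i + j = n then - (u i * s j) else 0)" by simp
  then show "(if 0 < n then (\<Sum>i<n. \<Sum>j<n. if i + j = 0 then u i * s j else if i + j = 0 + n then - (u i * s j) else 0) mod q else 0) =
    (\<Sum>i<n. u i * (\<Sum>j<n. if i + j = 0 then s j else if i + j = n then - s j else 0)) mod q"
    using \<open>n > 0\<close> by (simp only: sum_distrib_left if_True add_0) 
qed

lemma dec_vemb: "n > 0 \<Longrightarrow> rlwe_dec n q s (u, vemb x) = Dq q ((x - Lu n s u) mod q)"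
  unfolding rlwe_dec_def Dq_def rq_sub_def
  by (simp add: mult0 vemb_def mod_diff_right_eq Let_def)

lemma ip_vemb: "n > 0 \<Longrightarrow> ip n v' (vemb x) = v' 0 * x"
  unfolding ip_def vemb_def by (simp add: if_distrib cong: if_cong)

lemma shift_sum:
  assumes q: "q > 0"
  shows "(\<Sum>x\<in>{0..<q}. ee q (b * x) * Gi q ((x - L) mod q)) = ee q (b * L) * Ghat q b"
proof -
  have bij: "bij_betw (\<lambda>t. (t + L) mod q) {0..<q} {0..<q}"
    by (rule bij_betw_byWitness[where f'="\<lambda>x. (x - L) mod q"])
       (use q in \<open>auto simp: mod_add_left_eq mod_diff_left_eq\<close>)
  have "(\<Sum>x\<in>{0..<q}. ee q (b * x) * Gi q ((x - L) mod q))
      = (\<Sum>t\<in>{0..<q}. ee q (b * ((t + L) mod q)) * Gi q (((t + L) mod q - L) mod q))"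
    by (rule sum.reindex_bij_betw[OF bij, symmetric])
  also have "\<dots> = (\<Sum>t\<in>{0..<q}. ee q (b * L) * (ee q (b * t) * Gi q t))"
  proof (rule sum.cong[OF refl])
    fix t assume t: "t \<in> {0..<q}"
    have "((t + L) mod q - L) mod q = t" using t by (simp add: mod_diff_left_eq)
    moreover have "ee q (b * ((t + L) mod q)) = ee q (b * L + b * t)"
    proof (rule ee_cong[OF q])
      have "q dvd ((t + L) mod q - (t + L))" by (metis mod_mod_trivial mod_eq_dvd_iff)
      then have "q dvd b * ((t + L) mod q - (t + L))" by simp
      then show "q dvd b * ((t + L) mod q) - (b * L + b * t)" by (simp add: algebra_simps)
    qed
    ultimately show "ee q (b * ((t + L) mod q)) * Gi q (((t + L) mod q - L) mod q) = ee q (b * L) * (ee q (b * t) * Gi q t)"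
      by (simp add: ee_add)
  qed
  also have "\<dots> = ee q (b * L) * Ghat q b"
    by (simp add: Ghat_def sum_distrib_left)
  finally show ?thesis .
qed



lemma amp:
  assumes n: "n > 0" and q: "q > 0"
  shows "apply_mat (qspace n q {0}) (Umat n q) (query_oracle (rlwe_dec n q s) (psi0 n q)) ((u',v'),y',0)
     = (if y' then - cc n q else cc n q) * Ghat q (v' 0) *
       (if \<forall>i<n. q dvd (u' i + v' 0 * sp n s i) then 1 else 0)"
proof -
  define \<sigma> where "\<sigma> = (if y' then - cc n q else cc n q)"
  define Q :: complex where "Q = of_int q ^ n"
  have Q0: "Q \<noteq> 0" using q by (simp add: Q_def)
  define f where "f = rlwe_dec n q s"
  define G where "G u v = ee q (ip n u' u + ip n v' v) / Q * \<sigma> * (if f (u,v) then -1 else 1)" for u v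
  have T: "Umat n q ((u',v'),y',0) ((u,v),False,0) * query_oracle f (psi0 n q) ((u,v),False,0)
         + Umat n q ((u',v'),y',0) ((u,v),True,0) * query_oracle f (psi0 n q) ((u,v),True,0)
         = (if (\<forall>i>0. v i = 0) then G u v else 0)" for u v
    unfolding Umat_def query_oracle_def psi0_def G_def \<sigma>_def Q_def
    by (cases y'; cases "f (u,v)") auto
  have "apply_mat (qspace n q {0}) (Umat n q) (query_oracle f (psi0 n q)) ((u',v'),y',0)
      = (\<Sum>u\<in>Rq n q. \<Sum>v\<in>Rq n q. if (\<forall>i>0. v i = 0) then G u v else 0)"
    unfolding apply_mat_def sum_qspace T ..
  also have "\<dots> = (\<Sum>u\<in>Rq n q. \<Sum>x\<in>{0..<q}. G u (vemb x))"
    by (simp add: sum_V0[OF n])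
  also have "\<dots> = (\<Sum>u\<in>Rq n q. \<sigma> / Q * ee q (ip n u' u) * (\<Sum>x\<in>{0..<q}. ee q (v' 0 * x) * Gi q ((x - Lu n s u) mod q)))"
    unfolding G_def f_def
    by (simp add: ip_vemb[OF n] dec_vemb[OF n] ee_add Gi_def sum_distrib_left mult_ac)
  also have "\<dots> = (\<Sum>u\<in>Rq n q. \<sigma> / Q * Ghat q (v' 0) * ee q (\<Sum>i<n. u i * (u' i + v' 0 * sp n s i)))"
  proof (rule sum.cong[OF refl])
    fix u
    have "ip n u' u + v' 0 * Lu n s u = (\<Sum>i<n. u i * (u' i + v' 0 * sp n s i))"
      unfolding ip_def Lu_def by (simp add: sum_distrib_left sum.distrib algebra_simps)
    then have "ee q (ip n u' u) * ee q (v' 0 * Lu n s u) = ee q (\<Sum>i<n. u i * (u' i + v' 0 * sp n s i))"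
      by (simp add: ee_add[symmetric])
    then show "\<sigma> / Q * ee q (ip n u' u) * (\<Sum>x\<in>{0..<q}. ee q (v' 0 * x) * Gi q ((x - Lu n s u) mod q))
       = \<sigma> / Q * Ghat q (v' 0) * ee q (\<Sum>i<n. u i * (u' i + v' 0 * sp n s i))"
      by (subst shift_sum[OF q]) (simp add: mult_ac)
  qed
  also have "\<dots> = \<sigma> / Q * Ghat q (v' 0) * (\<Sum>u\<in>Rq n q. ee q (\<Sum>i<n. u i * (u' i + v' 0 * sp n s i)))"
    by (simp add: sum_distrib_left)
  also have "\<dots> = \<sigma> * Ghat q (v' 0) * (if \<forall>i<n. q dvd (u' i + v' 0 * sp n s i) then 1 else 0)"
    using Q0 by (auto simp: char_sum_Rq[OF q] Q_def[symmetric])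
  finally show ?thesis unfolding f_def \<sigma>_def .
qed



definition gi :: "int \<Rightarrow> int \<Rightarrow> int" where
  "gi q t = (if Dq q t then -1 else 1)"

lemma Dq_small:
  assumes q: "2 \<le> q" and t: "0 \<le> t" "t \<le> q div 2"
  shows "Dq q t \<longleftrightarrow> \<not> (2 * t < q div 2)"
proof -
  define h where "h = q div 2"
  have h: "2 * h \<le> q" "t \<le> h" "h < q" using q t by (auto simp: h_def)
  have c1: "cdist q t 0 = t"
  proof (cases "t = 0")
    case True then show ?thesis by (simp add: cdist_def)
  next
    case False
    then have "(0 - t) mod q = q - t" using t h
      by (metis diff_0 diff_ge_0_iff_ge diff_less_eq le_add_same_cancel2 less_le_trans mod_pos_pos_trivial
          order_le_less zmod_zminus1_eq_if mod_self add.commute less_add_same_cancel1 verit_comp_simplify1(3))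
    moreover have "t mod q = t" using t h by simp
    ultimately show ?thesis using h unfolding cdist_def by simp
  qed
  have c2: "cdist q t h = h - t"
  proof (cases "t = h")
    case True then show ?thesis by (simp add: cdist_def)
  next
    case False
    then have "(t - h) mod q = q - (h - t)" using t h
      by (smt (verit, ccfv_threshold) mod_add_self2 mod_pos_pos_trivial)
    moreover have "(h - t) mod q = h - t" using t h by simp
    ultimately show ?thesis using h t unfolding cdist_def by (simp add: min_def)
  qed
  show ?thesis unfolding Dq_def c1 using c2 by (simp add: h_def)
qed

lemma gi_sum_bound:
  assumes q: "2 \<le> q"
  shows "\<bar>\<Sum>t\<in>{0..<q}. gi q t\<bar> \<le> q - q div 2"
proof -
  define h where "h = q div 2"
  define m where "m = (h + 1) div 2"
  have hm: "0 \<le> m" "m \<le> h + 1" "h < q" "0 \<le> h" using q by (auto simp: h_def m_def)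
  have split: "{0..<q} = ({0..<m} \<union> {m..h}) \<union> {h+1..<q}" using hm by auto
  have s1: "(\<Sum>t\<in>{0..<m}. gi q t) = m"
  proof -
    have "(\<Sum>t\<in>{0..<m}. gi q t) = (\<Sum>t\<in>{0..<m}. 1)"
    proof (rule sum.cong[OF refl])
      fix t assume "t \<in> {0..<m}"
      then have "0 \<le> t" "t \<le> q div 2" "2 * t < q div 2" using hm by (auto simp: h_def m_def)
      then show "gi q t = 1" using Dq_small[OF q] by (simp add: gi_def)
    qed
    then show ?thesis using hm by simp
  qed
  have s2: "(\<Sum>t\<in>{m..h}. gi q t) = - (h - m + 1)"
  proof -
    have "(\<Sum>t\<in>{m..h}. gi q t) = (\<Sum>t\<in>{m..h}. -1)"
    proof (rule sum.cong[OF refl])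
      fix t assume "t \<in> {m..h}"
      then have "0 \<le> t" "t \<le> q div 2" "\<not> 2 * t < q div 2" using hm by (auto simp: h_def m_def)
      then show "gi q t = -1" using Dq_small[OF q] by (simp add: gi_def)
    qed
    then show ?thesis using hm by simp
  qed
  have s3: "\<bar>\<Sum>t\<in>{h+1..<q}. gi q t\<bar> \<le> q - h - 1"
  proof -
    have "\<bar>\<Sum>t\<in>{h+1..<q}. gi q t\<bar> \<le> (\<Sum>t\<in>{h+1..<q}. \<bar>gi q t\<bar>)" by (rule sum_abs)
    also have "\<dots> = (\<Sum>t\<in>{h+1..<q}. 1)"
      by (rule sum.cong[OF refl]) (simp add: gi_def)
    also have "\<dots> = q - h - 1" using hm by simp
    finally show ?thesis .
  qed
  have "(\<Sum>t\<in>{0..<q}. gi q t) = (\<Sum>t\<in>{0..<m}. gi q t) + (\<Sum>t\<in>{m..h}. gi q t) + (\<Sum>t\<in>{h+1..<q}. gi q t)"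
  proof -
    have d1: "{0..<m} \<inter> {m..h} = {}" by auto
    have d2: "({0..<m} \<union> {m..h}) \<inter> {h+1..<q} = {}" using hm by auto
    have "sum (gi q) (({0..<m} \<union> {m..h}) \<union> {h+1..<q}) = sum (gi q) ({0..<m} \<union> {m..h}) + sum (gi q) {h+1..<q}"
      by (rule sum.union_disjoint) (use d2 in auto)
    moreover have "sum (gi q) ({0..<m} \<union> {m..h}) = sum (gi q) {0..<m} + sum (gi q) {m..h}"
      by (rule sum.union_disjoint) (use d1 in auto)
    ultimately show ?thesis unfolding split by simp
  qed
  then have "(\<Sum>t\<in>{0..<q}. gi q t) = 2 * m - h - 1 + (\<Sum>t\<in>{h+1..<q}. gi q t)"
    using s1 s2 by simp
  moreover have "\<bar>2 * m - h - 1\<bar> \<le> 1" unfolding m_def by auto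
  ultimately show ?thesis using s3 unfolding h_def by linarith
qed



lemma cmod_psi0: "cmod (psi0 n q ((u,v),y,w)) = (if \<forall>i>0. v i = 0 then cmod (cc n q) else 0)"
  by (auto simp: psi0_def)

lemma cc_sq: assumes q: "q > 0" shows "(cmod (cc n q))^2 = 1 / (2 * real_of_int q ^ (n+1))"
proof -
  have P: "0 < 2 * real_of_int q ^ (n+1)" using q by simp
  have "cmod (cc n q) = 1 / sqrt (2 * real_of_int q ^ (n+1))" unfolding cc_def norm_of_real using P by simp
  then show ?thesis using P by (simp add: power_divide less_imp_le del: power_Suc)
qed

lemma finite_qspace: "finite (qspace n q {0})"
  by (simp add: qspace_def finite_Rq)

lemma psi0_norm:
  assumes n: "n > 0" and q: "q > 0"
  shows "(\<Sum>b\<in>qspace n q {0}. (cmod (psi0 n q b))^2) = 1"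
proof -
  have "(\<Sum>b\<in>qspace n q {0}. (cmod (psi0 n q b))^2)
     = (\<Sum>u\<in>Rq n q. \<Sum>v\<in>Rq n q. if \<forall>i>0. v i = 0 then 2 * (cmod (cc n q))^2 else 0)"
    unfolding sum_qspace cmod_psi0 by (intro sum.cong refl) auto
  also have "\<dots> = (\<Sum>u\<in>Rq n q. \<Sum>x\<in>{0..<q}. 2 * (cmod (cc n q))^2)"
    by (simp only: sum_V0[OF n])
  also have "\<dots> = real (card (Rq n q)) * (real_of_int q * (2 * (cmod (cc n q))^2))"
    using q by simp
  also have "\<dots> = 1"
    using q by (simp add: card_Rq cc_sq)
  finally show ?thesis .
qed

lemma phi_norm:
  "(\<Sum>b\<in>qspace n q {0}. (cmod (query_oracle f (psi0 n q) b))^2) = (\<Sum>b\<in>qspace n q {0}. (cmod (psi0 n q b))^2)"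
proof (rule sum.cong[OF refl])
  fix b :: qbasis
  obtain u v y w where "b = ((u,v),y,w)" by (metis prod.collapse)
  then show "(cmod (query_oracle f (psi0 n q) b))^2 = (cmod (psi0 n q b))^2"
    by (simp add: query_oracle_def cmod_psi0 del: psi0_def)
qed

definition outf :: "nat \<Rightarrow> int \<Rightarrow> qbasis \<Rightarrow> (nat \<Rightarrow> int)" where
  "outf n q b = (case b of ((u',v'),y,w) \<Rightarrow> SOME s. s \<in> Rq n q \<and> (\<forall>i<n. q dvd u' i + v' 0 * sp n s i))"

lemma sp_eq:
  assumes "i < n"
  shows "sp n s i = (if i = 0 then s 0 else - s (n - i))"
proof (cases "i = 0")
  case True
  have "sp n s i = (\<Sum>j<n. if j = 0 then s j else 0)"
    unfolding sp_def using True by (intro sum.cong refl) auto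
  also have "\<dots> = s 0" using assms by simp
  finally show ?thesis using True by simp
next
  case False
  have "sp n s i = (\<Sum>j<n. if j = n - i then - s j else 0)"
    unfolding sp_def using False assms by (intro sum.cong refl) auto
  also have "\<dots> = - s (n - i)" using assms False by simp
  finally show ?thesis using False by simp
qed

lemma out_correct:
  assumes q: "prime q" and s: "s \<in> Rq n q" and b0: "0 < b" "b < q"
    and c: "\<forall>i<n. q dvd u' i + b * sp n s i"
  shows "(SOME s. s \<in> Rq n q \<and> (\<forall>i<n. q dvd u' i + b * sp n s i)) = s"
proof (rule some_equality)
  show "s \<in> Rq n q \<and> (\<forall>i<n. q dvd u' i + b * sp n s i)" using s c by simp
next
  fix t assume t: "t \<in> Rq n q \<and> (\<forall>i<n. q dvd u' i + b * sp n t i)"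
  have nb: "\<not> q dvd b" using b0 zdvd_imp_le by fastforce
  have d: "q dvd sp n s i - sp n t i" if i: "i < n" for i
  proof -
    have "q dvd (u' i + b * sp n s i) - (u' i + b * sp n t i)" by (rule dvd_diff) (use c t i in auto)
    then have "q dvd b * (sp n s i - sp n t i)" by (simp add: algebra_simps)
    then show ?thesis using nb q prime_dvd_mult_iff by blast
  qed
  have "\<forall>j<n. q dvd (s j - t j)"
  proof (intro allI impI)
    fix j assume j: "j < n"
    show "q dvd (s j - t j)"
    proof (cases "j = 0")
      case True
      then show ?thesis using d[of 0] j sp_eq[of 0 n] by simp
    next
      case False
      then have "n - j < n" "n - j \<noteq> 0" "n - (n - j) = j" using j by auto
      then show ?thesis using d[of "n - j"] sp_eq[of "n - j" n]
        by (metis dvd_minus_iff minus_diff_eq minus_diff_minus)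
    qed
  qed
  then show "t = s" using Rq_dvd_eq[of t n q s] t s by blast
qed



lemma L1: assumes q: "q > 0"
  shows "(\<Sum>u\<in>Rq n q. if \<forall>i<n. q dvd u i then 1 else 0 :: real) = 1"
proof -
  have "(\<Sum>u\<in>Rq n q. if \<forall>i<n. q dvd u i then 1 else 0 :: real) = (\<Sum>u\<in>Rq n q. \<Prod>i<n. if q dvd u i then 1 else 0)"
    by (intro sum.cong refl) (auto simp: prod_zero_iff)
  also have "\<dots> = (\<Prod>i<n. \<Sum>x\<in>{0..<q}. if q dvd x then 1 else 0 :: real)"
    by (rule sum_prod_Rq)
  also have "\<dots> = 1"
  proof -
    have "{x\<in>{0..<q}. q dvd x} = {0}" using q zdvd_imp_le by fastforce
    then have "(\<Sum>x\<in>{0..<q}. if q dvd x then 1 else 0 :: real) = 1"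
      by (simp add: sum.inter_filter[symmetric])
    then show ?thesis by simp
  qed
  finally show ?thesis .
qed

lemma prod_if0: "(\<Prod>i<Suc m. if i = 0 then 1 else c) = (c::real) ^ m"
  by (induction m) auto

lemma L2: assumes q: "q > 0" and n: "n > 0"
  shows "(\<Sum>v\<in>Rq n q. if v 0 = 0 then 1 else 0 :: real) = real_of_int q ^ (n - 1)"
proof -
  have "(\<Sum>v\<in>Rq n q. if v 0 = 0 then 1 else 0 :: real) = (\<Sum>v\<in>Rq n q. \<Prod>i<n. if i = 0 then (if v i = 0 then 1 else 0) else 1)"
    using n by (intro sum.cong refl) (simp add: prod.delta)
  also have "\<dots> = (\<Prod>i<n. \<Sum>x\<in>{0..<q}. if i = 0 then (if x = 0 then 1 else 0) else 1 :: real)"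
    by (rule sum_prod_Rq)
  also have "\<dots> = (\<Prod>i<n. if i = 0 then 1 else real_of_int q)"
    using q by (intro prod.cong refl) auto
  also have "\<dots> = real_of_int q ^ (n - 1)"
    using n prod_if0[where m="n - 1" and c="real_of_int q"] by simp
  finally show ?thesis .
qed

lemma zero_part:
  assumes n: "n > 0" and q: "q > 0"
  shows "(\<Sum>b\<in>qspace n q {0}. if snd (fst b) 0 = 0 then
           (cmod (apply_mat (qspace n q {0}) (Umat n q) (query_oracle (rlwe_dec n q s) (psi0 n q)) b))^2 else 0)
         = (cmod (Ghat q 0))^2 / (real_of_int q)^2"
proof -
  define A where "A = apply_mat (qspace n q {0}) (Umat n q) (query_oracle (rlwe_dec n q s) (psi0 n q))"
  define K where "K = (cmod (cc n q))^2 * (cmod (Ghat q 0))^2"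
  have pt: "(if snd (fst ((u,v),y,0::nat)) 0 = 0 then (cmod (A ((u,v),y,0)))^2 else 0)
      = K * ((if v 0 = 0 then 1 else 0) * (if \<forall>i<n. q dvd u i then 1 else 0))" for u v y
    unfolding A_def amp[OF n q] K_def
    by (auto simp: norm_mult power_mult_distrib)
  have "(\<Sum>b\<in>qspace n q {0}. if snd (fst b) 0 = 0 then (cmod (A b))^2 else 0)
     = (\<Sum>u\<in>Rq n q. \<Sum>v\<in>Rq n q. 2 * K * ((if v 0 = 0 then 1 else 0) * (if \<forall>i<n. q dvd u i then 1 else 0)))"
    unfolding sum_qspace pt by (simp add: mult_ac)
  also have "\<dots> = 2 * K * (\<Sum>u\<in>Rq n q. if \<forall>i<n. q dvd u i then 1 else 0) * (\<Sum>v\<in>Rq n q. if v 0 = 0 then 1 else 0)"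
    by (simp add: sum_distrib_left sum_distrib_right mult_ac)
  also have "\<dots> = 2 * K * real_of_int q ^ (n - 1)"
    by (simp add: L1[OF q] L2[OF q n])
  also have "\<dots> = (cmod (Ghat q 0))^2 / (real_of_int q)^2"
  proof -
    have "real_of_int q ^ (n + 1) = real_of_int q ^ (n - 1) * (real_of_int q)^2"
      using n by (simp add: power_add[symmetric])
    then show ?thesis using q unfolding K_def cc_sq[OF q] by (simp add: field_simps)
  qed
  finally show ?thesis unfolding A_def .
qed



lemma Ghat0: "Ghat q 0 = of_int (\<Sum>t\<in>{0..<q}. gi q t)"
  unfolding Ghat_def of_int_sum by (intro sum.cong refl) (simp add: Gi_def gi_def)

lemma Ghat0_bound: assumes q: "2 \<le> q" shows "cmod (Ghat q 0) \<le> (real_of_int q + 1) / 2"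
proof -
  have "cmod (Ghat q 0) = \<bar>real_of_int (\<Sum>t\<in>{0..<q}. gi q t)\<bar>"
    unfolding Ghat0 by (metis norm_of_int of_int_abs)
  also have "\<dots> \<le> real_of_int (q - q div 2)"
    using gi_sum_bound[OF q] by (metis of_int_abs of_int_le_iff)
  also have "\<dots> \<le> (real_of_int q + 1) / 2"
  proof -
    have "2 * (q - q div 2) \<le> q + 1" by presburger
    then have "real_of_int (2 * (q - q div 2)) \<le> real_of_int (q + 1)"
      by (simp only: of_int_le_iff)
    then have "2 * real_of_int (q - q div 2) \<le> real_of_int q + 1" by simp
    then show ?thesis by (simp add: field_simps)
  qed
  finally show ?thesis .
qed

lemma success_bound:
  assumes n: "n > 0" and qp: "prime q" and s: "s \<in> Rq n q"
  shows "one_query_success n q {0} (psi0 n q) (Umat n q) (outf n q) (rlwe_dec n q s) s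
      \<ge> 1 - (cmod (Ghat q 0))^2 / (real_of_int q)^2"
proof -
  have q: "q > 0" using qp prime_gt_0_int by blast
  define S where "S = qspace n q {0}"
  define A where "A = apply_mat S (Umat n q) (query_oracle (rlwe_dec n q s) (psi0 n q))"
  have tot: "(\<Sum>b\<in>S. (cmod (A b))^2) = 1"
    unfolding A_def S_def
    using unitary_norm[OF finite_qspace unitary_U[OF q]] phi_norm psi0_norm[OF n q] by simp
  have pw: "(cmod (A b))^2 \<le> (if snd (fst b) 0 = 0 then (cmod (A b))^2 else 0)
            + (if outf n q b = s then (cmod (A b))^2 else 0)" if b: "b \<in> S" for b
  proof -
    obtain u' v' y' where bb: "b = ((u',v'),y',0)" and R: "u' \<in> Rq n q" "v' \<in> Rq n q"
      using b qspace0_elem unfolding S_def by metis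
    show ?thesis
    proof (cases "v' 0 = 0")
      case True then show ?thesis using bb by simp
    next
      case False
      then have b0: "0 < v' 0" "v' 0 < q" using R(2) n by (auto simp: Rq_def le_less)
      show ?thesis
      proof (cases "\<forall>i<n. q dvd u' i + v' 0 * sp n s i")
        case True
        then have "outf n q b = s" unfolding bb outf_def using out_correct[OF qp s b0] by simp
        then show ?thesis by simp
      next
        case False
        then have "A b = 0" unfolding A_def S_def bb amp[OF n q] by auto
        then show ?thesis by simp
      qed
    qed
  qed
  have "1 \<le> (\<Sum>b\<in>S. (if snd (fst b) 0 = 0 then (cmod (A b))^2 else 0)
            + (if outf n q b = s then (cmod (A b))^2 else 0))"
    unfolding tot[symmetric] by (rule sum_mono) (rule pw)
  also have "\<dots> = (cmod (Ghat q 0))^2 / (real_of_int q)^2 + (\<Sum>b\<in>S. if outf n q b = s then (cmod (A b))^2 else 0)"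
    unfolding sum.distrib A_def S_def zero_part[OF n q] ..
  also have "(\<Sum>b\<in>S. if outf n q b = s then (cmod (A b))^2 else 0)
      = one_query_success n q {0} (psi0 n q) (Umat n q) (outf n q) (rlwe_dec n q s) s"
    unfolding one_query_success_def A_def S_def
    by (simp add: sum.inter_filter finite_qspace)
  finally show ?thesis by simp
qed

lemma success_nonneg: "one_query_success n q W \<psi> U out f s \<ge> 0"
  unfolding one_query_success_def by (rule sum_nonneg) simp

theorem corollary3:
  shows "\<exists>\<epsilon> :: int \<Rightarrow> real. (\<epsilon> \<longlongrightarrow> 0) at_top \<and>
    (\<forall>(n::nat) (q::int). n > 0 \<and> (\<exists>k::nat. n = 2 ^ k) \<and> prime q \<longrightarrow>
      (\<exists>W \<psi>0 U out. valid_one_query_alg n q W \<psi>0 U \<and>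
         (\<forall>s \<in> Rq n q.
            one_query_success n q W \<psi>0 U out (rlwe_dec n q s) s \<ge> 4 / pi^2 - \<epsilon> q)))"
proof -
  define \<epsilon> :: "int \<Rightarrow> real" where "\<epsilon> = (\<lambda>q. if q < 100 then 1 else 0)"
  have lim: "(\<epsilon> \<longlongrightarrow> 0) at_top"
  proof (rule tendsto_eventually)
    show "\<forall>\<^sub>F x in at_top. \<epsilon> x = 0"
      unfolding \<epsilon>_def eventually_at_top_linorder by (rule exI[of _ 100]) simp
  qed
  have pi4: "4 / pi^2 \<le> 1 / 2"
  proof -
    have "sqrt 2 / 2 \<le> pi / 4" using sin_x_le_x[of "pi/4"] sin_45 by simp
    then have a: "2 * sqrt 2 \<le> pi" by simp
    have "(2 * sqrt 2)^2 \<le> pi^2" using power_mono[OF a, of 2] by simp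
    then have "8 \<le> pi^2" by (simp add: power_mult_distrib)
    then show ?thesis by (simp add: field_simps)
  qed
  have main: "\<forall>(n::nat) (q::int). n > 0 \<and> (\<exists>k::nat. n = 2 ^ k) \<and> prime q \<longrightarrow>
      (\<exists>W \<psi>0 U out. valid_one_query_alg n q W \<psi>0 U \<and>
         (\<forall>s \<in> Rq n q.
            one_query_success n q W \<psi>0 U out (rlwe_dec n q s) s \<ge> 4 / pi^2 - \<epsilon> q))"
  proof (intro allI impI)
    fix n :: nat and q :: int
    assume h: "n > 0 \<and> (\<exists>k::nat. n = 2 ^ k) \<and> prime q"
    then have n: "n > 0" and qp: "prime q" by auto
    have q: "q > 0" using qp prime_gt_0_int by blast
    have q2: "2 \<le> q" using qp prime_ge_2_int by blast
    show "\<exists>W \<psi>0 U out. valid_one_query_alg n q W \<psi>0 U \<and>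
           (\<forall>s \<in> Rq n q. one_query_success n q W \<psi>0 U out (rlwe_dec n q s) s \<ge> 4 / pi^2 - \<epsilon> q)"
    proof (rule exI[where x="{0}"], rule exI[where x="psi0 n q"], rule exI[where x="Umat n q"],
           rule exI[where x="outf n q"], intro conjI ballI)
      show "valid_one_query_alg n q {0} (psi0 n q) (Umat n q)"
        unfolding valid_one_query_alg_def using psi0_norm[OF n q] unitary_U[OF q] by simp
      fix s assume s: "s \<in> Rq n q"
      show "one_query_success n q {0} (psi0 n q) (Umat n q) (outf n q) (rlwe_dec n q s) s \<ge> 4 / pi^2 - \<epsilon> q"
      proof (cases "q < 100")
        case True
        have "4 / pi^2 - \<epsilon> q \<le> 0" using pi4 True unfolding \<epsilon>_def by simp
        then show ?thesis using success_nonneg[of n q "{0}" "psi0 n q" "Umat n q" "outf n q" "rlwe_dec n q s" s]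
          by linarith
      next
        case False
        define g where "g = cmod (Ghat q 0)"
        have g0: "0 \<le> g" unfolding g_def by simp
        have gb: "g \<le> (real_of_int q + 1) / 2" unfolding g_def by (rule Ghat0_bound[OF q2])
        have qr: "100 \<le> real_of_int q" using False by simp
        have g1: "g \<le> (51/100) * real_of_int q" using gb qr by (simp add: field_simps)
        have "g^2 \<le> ((51/100) * real_of_int q)^2" using power_mono[OF g1 g0, of 2] .
        then have "g^2 / (real_of_int q)^2 \<le> (2601/10000)"
          using qr by (simp add: divide_le_eq power_mult_distrib power_divide)
        moreover have "one_query_success n q {0} (psi0 n q) (Umat n q) (outf n q) (rlwe_dec n q s) s
            \<ge> 1 - g^2 / (real_of_int q)^2" unfolding g_def by (rule success_bound[OF n qp s])
        moreover have "4 / pi^2 - \<epsilon> q \<le> 1/2" using pi4 False unfolding \<epsilon>_def by simp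
        ultimately show ?thesis by linarith
      qed
    qed
qed
  show ?thesis using lim main by blast
qed

end
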